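(* Let $a,b,q$ be complex numbers with $q\neq 0$. For every formal power series $F(z)\in\mathbb{C}[[z]]$ there is an expansion $$F(z)=\sum_{n=0}^{\infty}c_n\,z^{n}\frac{(az;q)_n}{(bz;q)_n},$$ with coefficients $c_n$ independent of $z$ given by $$c_n=[z^{n}]\Big\{F(z)\frac{(bz;q)_{n-1}}{(az;q)_n}\Big\}-a\sum_{k=0}^{n-1}B_{n-k,1}(a,b)\,q^{(n-k)k}\,[z^{k}]\Big\{F(z)\frac{(bz;q)_{k}}{(az;q)_{k+1}}\Big\},$$ where the numbers $B_{n,1}(a,b)$ ($n\ge 1$) are defined by the expansion in $\mathbb{C}[[z]]$ $$z=\sum_{n=1}^\infty B_{n,1}(a,b)\,z^n\frac{(az;q)_n}{(bz;q)_n}.$$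
   Context: For any integer $n$ (including negative $n$), $(x;q)_n=\prod_{j\ge0}(1-xq^j)/\prod_{j\ge 0}(1-xq^{n+j})$; thus $(x;q)_0=1$, $(x;q)_n=\prod_{j=0}^{n-1}(1-xq^j)$ for $n\ge1$, and $(x;q)_{-1}=1/(1-x/q)$. All such quotients with argument a multiple of $z$ are regarded as formal power series in $z$. For $f(z)=\sum_{n\ge0}a_nz^n\in\mathbb{C}[[z]]$, $[z^n]\{f(z)\}:=a_n$. Empty sums are $0$. The family $\{z^n(az;q)_n/(bz;q)_n\}_{n\ge0}$ is a basis (in the formal-series sense) of $\mathbb{C}[[z]]$, so the $B_{n,1}(a,b)$ are uniquely determined. *)

theory Defs
  imports Complex_Main "HOL-Computational_Algebra.Formal_Power_Series"
begin

text \<open>For n \<ge> 0: prod_{j<n} (1 - x q^j z); for n = -m < 0: 1 / prod_{i=1..m} (1 - x q^(-i) z),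
  which agrees with prod_{j\<ge>0}(1 - x q^j z) / prod_{j\<ge>0}(1 - x q^(n+j) z).\<close>
definition qpoch :: "complex \<Rightarrow> complex \<Rightarrow> int \<Rightarrow> complex fps" where
  "qpoch x q n =
     (if 0 \<le> n then (\<Prod>j<nat n. 1 - fps_const (x * q ^ j) * fps_X)
      else inverse (\<Prod>i\<in>{1..nat (- n)}. 1 - fps_const (x / q ^ i) * fps_X))"

definition qbasis :: "complex \<Rightarrow> complex \<Rightarrow> complex \<Rightarrow> nat \<Rightarrow> complex fps" where
  "qbasis a b q n = fps_X ^ n * qpoch a q (int n) * inverse (qpoch b q (int n))"

end

theory Submission imports Defs begin
unbundle fps_syntax

definition lz :: "nat \<Rightarrow> complex fps \<Rightarrow> bool" where
  "lz n f \<longleftrightarrow> (\<forall>i<n. f $ i = 0)"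

lemma lz_mult: assumes "lz n f" "lz m g" shows "lz (n+m) (f*g)"
  unfolding lz_def
proof (intro allI impI)
  fix i assume i: "i < n+m"
  have "(f*g) $ i = (\<Sum>j=0..i. f$j * g$(i-j))" by (rule fps_mult_nth)
  also have "\<dots> = 0"
  proof (rule sum.neutral, intro ballI)
    fix j assume ji: "j \<in> {0..i}"
    show "f$j * g$(i-j) = 0"
    proof (cases "j < n")
      case True then show ?thesis using assms(1) by (simp add: lz_def)
    next
      case False then have "i - j < m" using i ji by auto
      then show ?thesis using assms(2) by (simp add: lz_def)
    qed
  qed
  finally show "(f*g) $ i = 0" .
qed

lemma lz_mult_left: "lz n f \<Longrightarrow> lz n (f*g)"
  using lz_mult[of n f 0 g] by (simp add: lz_def)
lemma lz_mult_right: "lz n f \<Longrightarrow> lz n (g*f)"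
  using lz_mult[of 0 g n f] by (simp add: lz_def)
lemma lz_add: "lz n f \<Longrightarrow> lz n g \<Longrightarrow> lz n (f+g)" by (simp add: lz_def)
lemma lz_diff: "lz n f \<Longrightarrow> lz n g \<Longrightarrow> lz n (f-g)" by (simp add: lz_def)
lemma lz_sum: "(\<And>k. k \<in> S \<Longrightarrow> lz n (f k)) \<Longrightarrow> lz n (sum f S)"
  by (simp add: lz_def fps_sum_nth)
lemma lz_mono: "lz n f \<Longrightarrow> m \<le> n \<Longrightarrow> lz m f" by (simp add: lz_def)
lemma lz_Xpow: "lz n (fps_X ^ n * g)" by (simp add: lz_def fps_X_power_mult_nth)

lemma qpoch_Suc: "qpoch x q (int (Suc n)) = qpoch x q (int n) * (1 - fps_const (x * q ^ n) * fps_X)"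
  by (simp add: qpoch_def del: of_nat_Suc)
lemma qpoch_0: "qpoch x q 0 = 1" by (simp add: qpoch_def)
lemma qpoch_nth0: "qpoch x q (int n) $ 0 = 1"
  by (induction n) (simp_all add: qpoch_0 qpoch_Suc del: of_nat_Suc)

lemma qpochm_Suc: "qpoch x q (int (Suc n) - 1) = qpoch x q (int n)" by simp

lemma qpochm_nth0: "qpoch x q (int n - 1) $ 0 = 1"
proof (cases n)
  case 0 then show ?thesis by (simp add: qpoch_def fps_inverse_def)
next
  case (Suc m) then show ?thesis using qpoch_nth0[of x q m] by simp
qed

lemma qpochm_rec: assumes "q \<noteq> 0"
  shows "qpoch x q (int n) = qpoch x q (int n - 1) * (1 - fps_const (x * q ^ n / q) * fps_X)"
proof (cases n)
  case 0
  have "qpoch x q (int 0 - 1) = inverse (1 - fps_const (x / q) * fps_X)" by (simp add: qpoch_def)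
  moreover have "inverse (1 - fps_const (x / q) * fps_X) * (1 - fps_const (x / q) * fps_X) = 1"
    by (rule inverse_mult_eq_1) simp
  ultimately show ?thesis using 0 by (simp add: qpoch_0)
next
  case (Suc m)
  have e1: "qpoch x q (int (Suc m) - 1) = qpoch x q (int m)" by simp
  have e2: "x * q ^ Suc m / q = x * q ^ m" using assms by simp
  show ?thesis unfolding Suc e1 e2 by (rule qpoch_Suc)
qed


definition sc :: "complex \<Rightarrow> complex fps \<Rightarrow> complex fps" where
  "sc c f = Abs_fps (\<lambda>n. c ^ n * f $ n)"

lemma sc_nth [simp]: "sc c f $ n = c ^ n * f $ n" by (simp add: sc_def)

lemma sc_mult: "sc c (f * g) = sc c f * sc c g"
proof (rule fps_ext)
  fix n
  have "sc c (f*g) $ n = (\<Sum>i=0..n. c^n * (f$i * g$(n-i)))"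
    by (simp add: fps_mult_nth sum_distrib_left)
  also have "\<dots> = (\<Sum>i=0..n. (c^i * f$i) * (c^(n-i) * g$(n-i)))"
  proof (rule sum.cong)
    fix i assume "i \<in> {0..n}"
    then have "c^n = c^i * c^(n-i)" by (simp add: power_add[symmetric])
    then show "c^n * (f$i * g$(n-i)) = (c^i * f$i) * (c^(n-i) * g$(n-i))" by (simp add: mult_ac)
  qed simp
  also have "\<dots> = (sc c f * sc c g) $ n" by (simp add: fps_mult_nth)
  finally show "sc c (f*g) $ n = (sc c f * sc c g) $ n" .
qed

lemma sc_add: "sc c (f + g) = sc c f + sc c g" by (rule fps_ext) (simp add: algebra_simps)
lemma sc_diff: "sc c (f - g) = sc c f - sc c g" by (rule fps_ext) (simp add: algebra_simps)
lemma sc_const: "sc c (fps_const d) = fps_const d" by (rule fps_ext) simp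
lemma sc_one: "sc c 1 = 1" by (rule fps_ext) simp
lemma sc_X: "sc c fps_X = fps_const c * fps_X" by (rule fps_ext) (simp add: fps_X_def)
lemma sc_sum: "sc c (sum f S) = (\<Sum>k\<in>S. sc c (f k))"
  by (rule fps_ext) (simp add: fps_sum_nth sum_distrib_left)
lemma sc_Xpow: "sc c (fps_X ^ n) = fps_const (c ^ n) * fps_X ^ n"
  by (induction n) (simp_all add: sc_one sc_mult sc_X mult_ac)
lemma sc_inverse: assumes "f $ 0 \<noteq> 0" shows "sc c (inverse f) = inverse (sc c f)"
proof -
  have "sc c f * sc c (inverse f) = 1"
    using inverse_mult_eq_1'[OF assms] by (simp add: sc_mult[symmetric] sc_one)
  then show ?thesis by (simp add: fps_inverse_unique)
qed
lemma lz_sc: "lz n f \<Longrightarrow> lz n (sc c f)" by (simp add: lz_def)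

lemma sc_qpoch: "sc c (qpoch x q (int n)) = qpoch (c * x) q (int n)"
  by (induction n) (simp_all add: qpoch_0 sc_one qpoch_Suc sc_mult sc_diff sc_const sc_X mult_ac
      del: of_nat_Suc)

lemma qpoch_add: "qpoch x q (int k) * qpoch (q ^ k * x) q (int j) = qpoch x q (int (k + j))"
proof (induction j)
  case 0 then show ?case by (simp add: qpoch_0)
next
  case (Suc j)
  have e: "x * q^(k+j) = q^k*x*q^j" by (simp add: power_add)
  have "k + Suc j = Suc (k+j)" by simp
  then have "qpoch x q (int (k + Suc j)) = qpoch x q (int (k+j)) * (1 - fps_const (x * q^(k+j)) * fps_X)"
    by (simp only: qpoch_Suc)
  also have "\<dots> = qpoch x q (int k) * qpoch (q^k*x) q (int j) * (1 - fps_const (q^k*x*q^j) * fps_X)"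
    by (simp only: Suc.IH[symmetric] e)
  also have "\<dots> = qpoch x q (int k) * qpoch (q^k*x) q (int (Suc j))"
    by (simp only: qpoch_Suc mult.assoc)
  finally show ?case by simp
qed

lemma qbasis_shift:
  "qbasis a b q k * sc (q ^ k) (qbasis a b q j) = fps_const (q ^ (j * k)) * qbasis a b q (k + j)"
proof -
  have i1: "qpoch b q (int n) $ 0 \<noteq> 0" for n by (simp add: qpoch_nth0)
  have s: "sc (q ^ k) (qbasis a b q j) =
      fps_const (q^(j*k)) * fps_X ^ j * qpoch (q^k * a) q (int j) * inverse (qpoch (q^k * b) q (int j))"
    unfolding qbasis_def by (simp add: sc_mult sc_Xpow sc_inverse[OF i1] sc_qpoch power_mult[symmetric] mult.commute[of j k])
  have ib: "inverse (qpoch b q (int (k+j))) = inverse (qpoch b q (int k)) * inverse (qpoch (q^k * b) q (int j))"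
  proof -
    have "qpoch b q (int (k+j)) = qpoch b q (int k) * qpoch (q^k*b) q (int j)" by (rule qpoch_add[symmetric])
    then show ?thesis by (simp only: fps_inverse_mult)
  qed
  have ia: "qpoch a q (int (k+j)) = qpoch a q (int k) * qpoch (q^k*a) q (int j)" by (rule qpoch_add[symmetric])
  have "qbasis a b q (k + j) = fps_X ^ k * fps_X ^ j * (qpoch a q (int k) * qpoch (q^k*a) q (int j))
     * (inverse (qpoch b q (int k)) * inverse (qpoch (q^k * b) q (int j)))"
    unfolding qbasis_def ia ib power_add by (rule refl)
  then show ?thesis unfolding s by (simp only: qbasis_def mult_ac)
qed

lemma lin_nth: "((1 - fps_const (c::complex) * fps_X) * f) $ i = f $ i - (if i = 0 then 0 else c * f $ (i - 1))"
proof -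
  have "(1 - fps_const c * fps_X) * f = f - fps_const c * (fps_X * f)" by (simp add: left_diff_distrib mult.assoc)
  then show ?thesis by simp
qed

lemma cut_step:
  fixes G0 G1 :: "complex fps"
  assumes "(1 - fps_const c * fps_X) * G1 = (1 - fps_const d * fps_X) * G0"
  shows "(1 - fps_const c * fps_X) * fps_cutoff (Suc N) G1 - (1 - fps_const d * fps_X) * fps_cutoff N G0
     = fps_const (G0 $ N) * fps_X ^ N - fps_const (c * G1 $ N) * fps_X ^ Suc N"
proof (rule fps_ext)
  fix i
  have e: "G1 $ i - (if i = 0 then 0 else c * G1 $ (i - 1)) = G0 $ i - (if i = 0 then 0 else d * G0 $ (i - 1))"
    using arg_cong[OF assms, of "\<lambda>f. f $ i"] by (simp only: lin_nth)
  show "((1 - fps_const c * fps_X) * fps_cutoff (Suc N) G1 - (1 - fps_const d * fps_X) * fps_cutoff N G0) $ i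
     = (fps_const (G0 $ N) * fps_X ^ N - fps_const (c * G1 $ N) * fps_X ^ Suc N) $ i"
  proof -
    consider "i < N" | "i = N" | "i = Suc N" | "i > Suc N" by linarith
    then show ?thesis
    proof cases
      case 1 then show ?thesis using e by (cases i) (auto simp: lin_nth)
    next
      case 2 then show ?thesis using e by (cases N) (auto simp: lin_nth)
    next
      case 3 then show ?thesis by (simp add: lin_nth)
    next
      case 4 then show ?thesis by (cases i) (auto simp: lin_nth)
    qed
  qed
qed


lemma tele:
  fixes a b q :: complex and F :: "complex fps"
  assumes hq: "q \<noteq> 0"
  defines "H \<equiv> \<lambda>n::nat. F * qpoch b q (int n - 1) * inverse (qpoch a q (int n))"
  shows "(\<Sum>n<N. fps_const (H n $ n) * qbasis a b q n
            - fps_const (a * q^n * (H (Suc n) $ n)) * fps_X * qbasis a b q n)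
     = qpoch a q (int N) * inverse (qpoch b q (int N - 1)) * fps_cutoff N (H N)"
proof (induction N)
  case 0 show ?case by simp
next
  case (Suc N)
  define pa where "pa = qpoch a q (int N)"
  define pb where "pb = qpoch b q (int N - 1)"
  define La where "La = 1 - fps_const (a*q^N) * fps_X"
  define Lb where "Lb = 1 - fps_const (b*q^N/q) * fps_X"
  define W where "W = pa * inverse (pb * Lb)"
  have paS: "qpoch a q (int (Suc N)) = pa * La" by (simp only: pa_def La_def qpoch_Suc)
  have pbN: "qpoch b q (int N) = pb * Lb" unfolding pb_def Lb_def by (rule qpochm_rec[OF hq])
  have pbS: "qpoch b q (int (Suc N) - 1) = pb * Lb" using pbN by simp
  have La0: "La $ 0 \<noteq> 0" by (simp add: La_def)
  have Lb0: "Lb $ 0 \<noteq> 0" by (simp add: Lb_def)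
  have HS: "H (Suc N) = F * (pb*Lb) * (inverse pa * inverse La)"
    unfolding H_def by (simp only: pbS paS fps_inverse_mult)
  have HN: "H N = F * pb * inverse pa" by (simp add: H_def pa_def pb_def)
  have linv: "La * inverse La = 1" by (rule inverse_mult_eq_1'[OF La0])
  have "La * H (Suc N) = (F * pb * inverse pa * Lb) * (La * inverse La)" by (simp add: HS mult_ac)
  also have "\<dots> = Lb * H N" by (simp add: HN linv mult_ac)
  finally have key: "La * H (Suc N) = Lb * H N" .
  have step: "La * fps_cutoff (Suc N) (H (Suc N)) - Lb * fps_cutoff N (H N)
     = fps_const (H N $ N) * fps_X ^ N - fps_const (a*q^N * H (Suc N) $ N) * fps_X ^ Suc N"
    using cut_step[OF key[unfolded La_def Lb_def]] unfolding La_def Lb_def .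
  have lbinv: "inverse Lb * Lb = 1" by (rule inverse_mult_eq_1[OF Lb0])
  have U0: "pa * inverse pb = W * Lb"
  proof -
    have "W * Lb = pa * inverse pb * (inverse Lb * Lb)" by (simp add: W_def fps_inverse_mult mult_ac)
    then show ?thesis by (simp add: lbinv)
  qed
  have qb: "qbasis a b q N = fps_X^N * W" by (simp add: qbasis_def pbN W_def pa_def mult_ac)
  have U1: "qpoch a q (int (Suc N)) * inverse (qpoch b q (int (Suc N) - 1)) = W * La"
    by (simp only: paS pbS W_def mult_ac)
  have trm: "fps_const (H N $ N) * qbasis a b q N
            - fps_const (a * q^N * (H (Suc N) $ N)) * fps_X * qbasis a b q N
       = W * (La * fps_cutoff (Suc N) (H (Suc N)) - Lb * fps_cutoff N (H N))"
    unfolding step qb by (simp add: algebra_simps)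
  have IH': "(\<Sum>n<N. fps_const (H n $ n) * qbasis a b q n
            - fps_const (a * q^n * (H (Suc n) $ n)) * fps_X * qbasis a b q n)
       = W * Lb * fps_cutoff N (H N)"
    using Suc.IH unfolding pa_def[symmetric] pb_def[symmetric] U0 .
  show ?case
    unfolding sum.lessThan_Suc IH' trm U1 by (simp add: algebra_simps)
qed


lemma lz_qbasis: "lz n (qbasis a b q n)"
  unfolding qbasis_def by (rule lz_mult_left[OF lz_Xpow])

lemma lz_cut: "lz N (G - fps_cutoff N G)" by (simp add: lz_def)

lemma fps_const_sum': "fps_const (sum f S) = (\<Sum>k\<in>S. fps_const (f k))"
  by (induction S rule: infinite_finite_induct) (simp_all add: fps_const_add[symmetric])

lemma swap_sum:
  fixes g :: "nat \<Rightarrow> nat \<Rightarrow> complex fps"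
  shows "(\<Sum>n<N. \<Sum>k<n. g n k) = (\<Sum>k<N. \<Sum>j<N - Suc k. g (Suc k + j) k)"
proof (induction N)
  case 0 then show ?case by simp
next
  case (Suc N)
  have "(\<Sum>k<Suc N. \<Sum>j<Suc N - Suc k. g (Suc k + j) k) = (\<Sum>k<N. \<Sum>j<Suc N - Suc k. g (Suc k + j) k)"
    by (simp add: sum.lessThan_Suc)
  also have "\<dots> = (\<Sum>k<N. (\<Sum>j<N - Suc k. g (Suc k + j) k) + g N k)"
  proof (rule sum.cong)
    fix k assume "k \<in> {..<N}"
    then have e: "Suc N - Suc k = Suc (N - Suc k)" and e2: "Suc k + (N - Suc k) = N" by auto
    show "(\<Sum>j<Suc N - Suc k. g (Suc k + j) k) = (\<Sum>j<N - Suc k. g (Suc k + j) k) + g N k"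
      unfolding e sum.lessThan_Suc e2 ..
  qed simp
  also have "\<dots> = (\<Sum>n<N. \<Sum>k<n. g n k) + (\<Sum>k<N. g N k)" by (simp add: sum.distrib Suc.IH)
  finally show ?case by (simp add: sum.lessThan_Suc)
qed

lemma Bpart:
  fixes a b q :: complex and B :: "nat \<Rightarrow> complex"
  assumes hB: "(\<lambda>n. fps_const (B (Suc n)) * qbasis a b q (Suc n)) sums fps_X"
  shows "lz (Suc M) (fps_X - (\<Sum>j<M. fps_const (B (Suc j)) * qbasis a b q (Suc j)))"
  unfolding lz_def
proof (intro allI impI)
  fix i assume i: "i < Suc M"
  define f where "f = (\<lambda>n. fps_const (B (Suc n)) * qbasis a b q (Suc n))"
  have "eventually (\<lambda>N. (\<Sum>n<N. f n) $ i = fps_X $ i) sequentially"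
    using hB unfolding sums_def f_def tendsto_fps_iff by blast
  then obtain N0 where N0: "\<And>N. N \<ge> N0 \<Longrightarrow> (\<Sum>n<N. f n) $ i = fps_X $ i"
    unfolding eventually_sequentially by blast
  define N where "N = max N0 M"
  have MN: "M \<le> N" and "N \<ge> N0" by (auto simp: N_def)
  then have c1: "(\<Sum>n<N. f n) $ i = fps_X $ i" using N0 by blast
  have split: "(\<Sum>n<N. f n) = (\<Sum>n<M. f n) + (\<Sum>n=M..<N. f n)"
    using MN by (simp add: lessThan_atLeast0 sum.atLeastLessThan_concat)
  have "lz (Suc M) (\<Sum>n=M..<N. f n)"
  proof (rule lz_sum)
    fix n assume "n \<in> {M..<N}"
    then have "Suc M \<le> Suc n" by simp
    then show "lz (Suc M) (f n)" unfolding f_def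
      by (intro lz_mult_right lz_mono[OF lz_qbasis])
  qed
  then have "(\<Sum>n=M..<N. f n) $ i = 0" using i by (simp add: lz_def)
  then show "(fps_X - (\<Sum>j<M. fps_const (B (Suc j)) * qbasis a b q (Suc j))) $ i = 0"
    using c1 split by (simp add: f_def)
qed


lemma inner_eq:
  fixes a b q :: complex and B :: "nat \<Rightarrow> complex"
  shows "(\<Sum>j<M. fps_const (B (Suc k + j - k) * q ^ ((Suc k + j - k) * k) * d) * qbasis a b q (Suc k + j))
     = fps_const d * qbasis a b q k * sc (q ^ k) (\<Sum>j<M. fps_const (B (Suc j)) * qbasis a b q (Suc j))"
proof -
  have "fps_const d * qbasis a b q k * sc (q ^ k) (\<Sum>j<M. fps_const (B (Suc j)) * qbasis a b q (Suc j))
     = (\<Sum>j<M. fps_const d * fps_const (B (Suc j)) * (qbasis a b q k * sc (q ^ k) (qbasis a b q (Suc j))))"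
    by (simp add: sc_sum sc_mult sc_const sum_distrib_left mult_ac del: fps_const_mult)
  also have "\<dots> = (\<Sum>j<M. fps_const (B (Suc k + j - k) * q ^ ((Suc k + j - k) * k) * d) * qbasis a b q (Suc k + j))"
  proof (rule sum.cong)
    fix j
    have e1: "Suc k + j - k = Suc j" and e2: "k + Suc j = Suc k + j" by auto
    show "fps_const d * fps_const (B (Suc j)) * (qbasis a b q k * sc (q ^ k) (qbasis a b q (Suc j)))
        = fps_const (B (Suc k + j - k) * q ^ ((Suc k + j - k) * k) * d) * qbasis a b q (Suc k + j)"
      unfolding qbasis_shift e1 e2 by (simp add: mult_ac)
  qed simp
  finally show ?thesis by simp
qed

theorem theorem1p1:
  fixes a b q :: complex and F :: "complex fps" and B :: "nat \<Rightarrow> complex"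
  assumes hq: "q \<noteq> 0"
    and hB: "(\<lambda>n. fps_const (B (Suc n)) * qbasis a b q (Suc n)) sums fps_X"
  shows "(\<lambda>n. fps_const
            (fps_nth (F * qpoch b q (int n - 1) * inverse (qpoch a q (int n))) n
             - a * (\<Sum>k<n. B (n - k) * q ^ ((n - k) * k) *
                     fps_nth (F * qpoch b q (int k) * inverse (qpoch a q (int k + 1))) k))
          * qbasis a b q n) sums F"
proof -
  define H where "H = (\<lambda>n::nat. F * qpoch b q (int n - 1) * inverse (qpoch a q (int n)))"
  define P where "P = qbasis a b q"
  define D where "D = (\<lambda>k::nat. H (Suc k) $ k)"
  have HD: "fps_nth (F * qpoch b q (int k) * inverse (qpoch a q (int k + 1))) k = D k" for k
  proof -
    have e1: "int (Suc k) = int k + 1" by simp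
    have e2: "int k + 1 - 1 = int k" by simp
    show ?thesis by (simp only: D_def H_def e1 e2)
  qed
  define S where "S = (\<lambda>N. \<Sum>n<N. fps_const (H n $ n - a * (\<Sum>k<n. B (n - k) * q ^ ((n - k) * k) * D k)) * P n)"
  define DS where "DS = (\<lambda>N. \<Sum>n<N. \<Sum>k<n. fps_const (B (n - k) * q ^ ((n - k) * k) * D k) * P n)"
  define E where "E = (\<lambda>N. \<Sum>k<N. fps_const (D k) * P k * fps_const (q ^ k) * fps_X)"
  define T where "T = (\<lambda>N. \<Sum>n<N. fps_const (H n $ n) * P n - fps_const (a * q^n * (H (Suc n) $ n)) * fps_X * P n)"
  have main: "lz N (F - S N)" for N
  proof -
    have S_eq: "S N = (\<Sum>n<N. fps_const (H n $ n) * P n) - fps_const a * DS N"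
      unfolding S_def DS_def
      by (simp add: fps_const_sum' sum_distrib_left sum_distrib_right sum_subtractf
            fps_const_sub[symmetric] fps_const_mult[symmetric] algebra_simps del: fps_const_sub fps_const_mult)
    have T_eq: "T N = (\<Sum>n<N. fps_const (H n $ n) * P n) - fps_const a * E N"
    proof -
      have pt: "fps_const (a * q^n * (H (Suc n) $ n)) * fps_X * P n
          = fps_const a * (fps_const (D n) * P n * fps_const (q ^ n) * fps_X)" for n
        by (simp add: D_def fps_const_mult[symmetric] mult_ac del: fps_const_mult)
      show ?thesis unfolding T_def E_def sum_subtractf sum_distrib_left pt by (rule refl)
    qed
    have FT: "lz N (F - T N)"
    proof -
      define U where "U = qpoch a q (int N) * inverse (qpoch b q (int N - 1))"
      have TU: "T N = U * fps_cutoff N (H N)"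
        unfolding T_def U_def P_def H_def by (rule tele[OF hq])
      have a0: "qpoch a q (int N) $ 0 \<noteq> 0" by (simp add: qpoch_nth0)
      have b0: "qpoch b q (int N - 1) $ 0 \<noteq> 0" by (simp add: qpochm_nth0)
      have "U * H N = F * (qpoch a q (int N) * inverse (qpoch a q (int N)))
           * (inverse (qpoch b q (int N - 1)) * qpoch b q (int N - 1))"
        by (simp add: U_def H_def mult_ac)
      also have "\<dots> = F" by (simp add: inverse_mult_eq_1'[OF a0] inverse_mult_eq_1[OF b0])
      finally have UH: "U * H N = F" .
      have "F - T N = U * (H N - fps_cutoff N (H N))"
        by (simp add: TU UH[symmetric] algebra_simps)
      then show ?thesis using lz_mult_right[OF lz_cut] by simp
    qed
    have DE: "lz N (DS N - E N)"
    proof -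
      have "DS N = (\<Sum>k<N. \<Sum>j<N - Suc k. fps_const (B (Suc k + j - k) * q ^ ((Suc k + j - k) * k) * D k) * P (Suc k + j))"
        unfolding DS_def by (rule swap_sum)
      also have "\<dots> = (\<Sum>k<N. fps_const (D k) * P k * sc (q ^ k) (\<Sum>j<N - Suc k. fps_const (B (Suc j)) * P (Suc j)))"
        unfolding P_def by (rule sum.cong[OF refl], rule inner_eq)
      finally have DS_eq: "DS N = \<dots>" .
      have "DS N - E N = (\<Sum>k<N. fps_const (D k) * P k *
               sc (q ^ k) ((\<Sum>j<N - Suc k. fps_const (B (Suc j)) * P (Suc j)) - fps_X))"
        unfolding DS_eq E_def sum_subtractf[symmetric]
        by (rule sum.cong[OF refl]) (simp add: sc_diff sc_X algebra_simps)
      also have "lz N \<dots>"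
      proof (rule lz_sum)
        fix k assume k: "k \<in> {..<N}"
        have "lz (k + Suc (N - Suc k)) (P k * sc (q ^ k) ((\<Sum>j<N - Suc k. fps_const (B (Suc j)) * P (Suc j)) - fps_X))"
        proof (rule lz_mult)
          show "lz k (P k)" unfolding P_def by (rule lz_qbasis)
          have "lz (Suc (N - Suc k)) (fps_X - (\<Sum>j<N - Suc k. fps_const (B (Suc j)) * P (Suc j)))"
            unfolding P_def by (rule Bpart[OF hB])
          then have "lz (Suc (N - Suc k)) ((\<Sum>j<N - Suc k. fps_const (B (Suc j)) * P (Suc j)) - fps_X)"
            by (simp add: lz_def)
          then show "lz (Suc (N - Suc k)) (sc (q ^ k) ((\<Sum>j<N - Suc k. fps_const (B (Suc j)) * P (Suc j)) - fps_X))"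
            by (rule lz_sc)
        qed
        moreover have "k + Suc (N - Suc k) = N" using k by auto
        ultimately show "lz N (fps_const (D k) * P k *
               sc (q ^ k) ((\<Sum>j<N - Suc k. fps_const (B (Suc j)) * P (Suc j)) - fps_X))"
          by (simp add: mult.assoc lz_mult_right)
      qed
      finally show ?thesis .
    qed
    have eq: "F - S N = (F - T N) + fps_const a * (DS N - E N)"
      by (simp add: S_eq T_eq algebra_simps)
    show ?thesis unfolding eq by (rule lz_add[OF FT lz_mult_right[OF DE]])
  qed
  have Seq: "(\<lambda>N. \<Sum>n<N. fps_const
            (fps_nth (F * qpoch b q (int n - 1) * inverse (qpoch a q (int n))) n
             - a * (\<Sum>k<n. B (n - k) * q ^ ((n - k) * k) *
                     fps_nth (F * qpoch b q (int k) * inverse (qpoch a q (int k + 1))) k))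
          * qbasis a b q n) = S"
    unfolding S_def HD by (simp add: H_def P_def)
  show ?thesis
    unfolding sums_def Seq
  proof (rule tendsto_fpsI)
    fix i
    show "eventually (\<lambda>N. S N $ i = F $ i) sequentially"
      unfolding eventually_sequentially
    proof (intro exI allI impI)
      fix N assume "Suc i \<le> N"
      then have "(F - S N) $ i = 0" using main[of N] by (simp add: lz_def)
      then show "S N $ i = F $ i" by simp
    qed
  qed
qed

end
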